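(* Let $M,t\ge 1$ be integers and $n=Mt$. Let $S_1,\dots,S_t\subseteq U$ be finite sets with $|S_k|\le M$ for every $k$, and let $x\in S_1\cap\dots\cap S_t$. Build a pair of tables as follows: - Table 1 uses mapping $h_1$ and ordering $H$. Here $x$ is placed in the table of $S_k$ iff every $s\in S_k\setminus\{x\}$ with $h_1(s)=h_1(x)$ has $H(s)>H(x)$. - Table 2 uses mapping $h_2$ and the reversed ordering. Here $x$ is placed in the table of $S_k$ iff every $s\in S_k\setminus\{x\}$ with $h_2(s)=h_2(x)$ has $H(s)<H(x)$. Say $x$ fails in a table if it is not placed in the table of at least one $S_k$. Then \[ \Pr[x\text{ fails in both tables}]\le\int_0^1(1-e^{-p})(1-e^{-(1-p)})\,dp=3e^{-1}-1\approx 0.10363 . \] Moreover, for $m$ such pairs of tables built with mutually independent triples $(h_1,h_2,H)$, the probability that $x$ fails in all $2m$ tables is at most $(3e^{-1}-1)^m$. In particular, for $m=13$ (26 tables) this is at most $2^{-42}$.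
   Context: Let $U$ be a universe of elements and let $n=Mt$ bins, indexed by $[n]$. The functions $h_1,h_2:U\to[n]$ are independent uniformly random functions. $H:U\to[0,1]$ has i.i.d. uniform values and is independent of $h_1,h_2$. The same functions are used for all $t$ sets. *)

theory Defs
  imports "HOL-Probability.Probability"
begin

text \<open>A uniformly random
  function h : U \<Rightarrow> [n] is modelled by the product of uniform distributions
  over all elements of the universe (the type 'a).\<close>
definition hash_space :: "nat \<Rightarrow> ('a \<Rightarrow> nat) measure" where
  "hash_space n = PiM UNIV (\<lambda>_. measure_pmf (pmf_of_set {..<n}))"

definition order_space :: "('a \<Rightarrow> real) measure" where
  "order_space = PiM UNIV (\<lambda>_. uniform_measure lborel {0..1})"

definition triple_space :: "nat \<Rightarrow> (('a \<Rightarrow> nat) \<times> ('a \<Rightarrow> nat) \<times> ('a \<Rightarrow> real)) measure" where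
  "triple_space n = hash_space n \<Otimes>\<^sub>M (hash_space n \<Otimes>\<^sub>M order_space)"

definition placed1 :: "('a \<Rightarrow> nat) \<Rightarrow> ('a \<Rightarrow> real) \<Rightarrow> 'a set \<Rightarrow> 'a \<Rightarrow> bool" where
  "placed1 h1 H S x = (\<forall>s\<in>S - {x}. h1 s = h1 x \<longrightarrow> H s > H x)"

definition placed2 :: "('a \<Rightarrow> nat) \<Rightarrow> ('a \<Rightarrow> real) \<Rightarrow> 'a set \<Rightarrow> 'a \<Rightarrow> bool" where
  "placed2 h2 H S x = (\<forall>s\<in>S - {x}. h2 s = h2 x \<longrightarrow> H s < H x)"

definition fails_both ::
  "nat \<Rightarrow> (nat \<Rightarrow> 'a set) \<Rightarrow> 'a \<Rightarrow> ('a \<Rightarrow> nat) \<times> ('a \<Rightarrow> nat) \<times> ('a \<Rightarrow> real) \<Rightarrow> bool" where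
  "fails_both t S x \<omega> = (case \<omega> of (h1, h2, H) \<Rightarrow>
      (\<exists>k\<in>{1..t}. \<not> placed1 h1 H (S k) x) \<and> (\<exists>k\<in>{1..t}. \<not> placed2 h2 H (S k) x))"

end

theory Submission
  imports Defs
begin

abbreviation Mh :: "nat \<Rightarrow> nat measure" where "Mh n \<equiv> measure_pmf (pmf_of_set {..<n})"

lemma space_hash[simp]: "space (hash_space n) = UNIV"
  by (simp add: hash_space_def space_PiM)

lemma hash_pps: "product_prob_space (\<lambda>_::'a. Mh n)"
  by (simp add: product_prob_space_def product_sigma_finite_def product_prob_space_axioms_def
      prob_space_measure_pmf prob_space_imp_sigma_finite)

lemma hash_lower:
  fixes T :: "'a set" and x :: 'a
  assumes n: "n \<ge> 1" and T: "finite T" "x \<notin> T"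
  shows "(\<Prod>s\<in>T. if B s then 1 - 1/real n else 1) \<le> measure (hash_space n) {h. \<forall>s\<in>T. B s \<longrightarrow> h s \<noteq> h x}"
proof -
  interpret HS: product_prob_space "\<lambda>_::'a. Mh n" UNIV by (rule hash_pps)
  define X where "X u = (\<lambda>s. if s = x then {u} else if B s then -{u} else (UNIV::nat set))" for u
  define box where "box u = {h \<in> space (hash_space n). \<forall>s\<in>insert x T. h s \<in> X u s}" for u
  have pu: "measure (Mh n) {u} = 1 / real n" if "u < n" for u
    using that n by (subst measure_pmf_single) (simp add: pmf_of_set lessThan_empty_iff)
  have pc: "measure (Mh n) (-{u}) = 1 - 1 / real n" if "u < n" for u
    using pu[OF that] measure_pmf.prob_compl[of "{u}" "pmf_of_set {..<n}"] by (simp add: Compl_eq_Diff_UNIV)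
  have mb: "measure (hash_space n) (box u) = 1 / real n * (\<Prod>s\<in>T. if B s then 1 - 1/real n else 1)"
    if u: "u < n" for u
  proof -
    have "measure (hash_space n) (box u) = (\<Prod>s\<in>insert x T. measure (Mh n) (X u s))"
      unfolding box_def hash_space_def
      using HS.emeasure_PiM_Collect[of "insert x T" "X u"] T
      by (simp add: HS.P.emeasure_eq_measure measure_pmf.emeasure_eq_measure prod_ennreal measure_nonneg prod_nonneg)
    also have "\<dots> = measure (Mh n) {u} * (\<Prod>s\<in>T. measure (Mh n) (X u s))"
      using T by (simp add: X_def)
    also have "(\<Prod>s\<in>T. measure (Mh n) (X u s)) = (\<Prod>s\<in>T. if B s then 1 - 1/real n else 1)"
      using T u by (intro prod.cong) (auto simp: X_def pc)
    finally show ?thesis using pu[OF u] by simp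
  qed
  have sets_box: "box u \<in> sets (hash_space n)" for u
  proof -
    have "box u = prod_emb UNIV (\<lambda>_. Mh n) (insert x T) (Pi\<^sub>E (insert x T) (X u))"
      by (auto simp: box_def prod_emb_def hash_space_def space_PiM)
    also have "\<dots> \<in> sets (hash_space n)"
      unfolding hash_space_def using T by (intro sets_PiM_I) auto
    finally show ?thesis .
  qed
  have "measure (hash_space n) (\<Union>u\<in>{..<n}. box u) = (\<Sum>u\<in>{..<n}. measure (hash_space n) (box u))"
    apply (rule HS.P.finite_measure_finite_Union[unfolded hash_space_def[symmetric]])
    using sets_box apply auto[2]
    by (auto simp: disjoint_family_on_def box_def X_def)
  also have "\<dots> = (\<Prod>s\<in>T. if B s then 1 - 1/real n else 1)"
    using n by (simp add: mb)
  finally have eq: "measure (hash_space n) (\<Union>u\<in>{..<n}. box u) = (\<Prod>s\<in>T. if B s then 1 - 1/real n else 1)" .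
  have sub: "(\<Union>u\<in>{..<n}. box u) \<subseteq> {h. \<forall>s\<in>T. B s \<longrightarrow> h s \<noteq> h x}"
    using T by (auto simp: box_def X_def)
  have ms: "{h. \<forall>s\<in>T. B s \<longrightarrow> h s \<noteq> h x} \<in> sets (hash_space n)"
  proof -
    have "{h \<in> space (hash_space n). \<forall>s\<in>T. B s \<longrightarrow> h s \<noteq> h x} \<in> sets (hash_space n)"
      unfolding hash_space_def using T by measurable
    then show ?thesis by simp
  qed
  show ?thesis
    using HS.P.finite_measure_mono[unfolded hash_space_def[symmetric], OF sub ms] eq by simp
qed


lemma exp_le_pow:
  fixes p :: real and n N :: nat
  assumes p: "0 \<le> p" "p \<le> 1" and n: "n \<ge> 1" and N: "N \<le> n - 1"
  shows "exp (- p) \<le> (1 - p / n) ^ N"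
proof -
  have b0: "0 \<le> 1 - p / n" and b1: "1 - p / n \<le> 1"
    using p n by (auto simp: field_simps)
  have m: "(1 - p / n) ^ (n - 1) \<le> (1 - p / n) ^ N"
    by (rule power_decreasing[OF N b0 b1])
  have "exp (- p) \<le> (1 - p / n) ^ (n - 1)"
  proof (cases "n = 1")
    case True then show ?thesis using p by simp
  next
    case False
    then have n2: "real n \<ge> 2" using n by simp
    have np: "real n - p > 0" using n2 p by simp
    have "1 + p / (n - p) \<le> exp (p / (n - p))" by (rule exp_ge_add_one_self)
    also have "1 + p / (n - p) = n / (n - p)" using np by (simp add: field_simps)
    finally have "n / (n - p) \<le> exp (p / (n - p))" .
    then have "exp (- (p / (n - p))) \<le> (n - p) / n"
      using np n2 by (simp add: exp_minus field_simps)
    also have "(n - p) / n = 1 - p / n" using n2 by (simp add: field_simps)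
    finally have e1: "exp (- (p / (n - p))) \<le> 1 - p / n" .
    have "exp (- p) \<le> exp (- (p / (n - p)) * real (n - 1))"
    proof -
      have "p / (n - p) * real (n - 1) \<le> p"
        using np n p mult_left_le[of p p] by (simp add: field_simps of_nat_diff)
      then show ?thesis by simp
    qed
    also have "\<dots> = exp (- (p / (n - p))) ^ (n - 1)"
      by (simp add: exp_of_nat2_mult[symmetric] mult.commute)
    also have "\<dots> \<le> (1 - p / n) ^ (n - 1)"
      using e1 by (intro power_mono) auto
    finally show ?thesis .
  qed
  with m show ?thesis by linarith
qed

lemma G_integral:
  "((\<lambda>p::real. (1 - exp (- p)) * (1 - exp (- (1 - p)))) has_integral (3 * exp (- 1) - 1)) {0..1}"
proof -
  define F where "F p = p + exp (- p) - exp (p - 1) + exp (- 1) * p" for p :: real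
  have d: "(F has_vector_derivative (1 - exp (- p)) * (1 - exp (- (1 - p)))) (at p within {0..1})" for p
  proof -
    have "(F has_real_derivative (1 - exp (- p) - exp (p - 1) + exp (- 1))) (at p)"
      unfolding F_def by (auto intro!: derivative_eq_intros)
    moreover have "1 - exp (- p) - exp (p - 1) + exp (- 1) = (1 - exp (- p)) * (1 - exp (- (1 - p)))"
      by (simp add: algebra_simps exp_add[symmetric])
    ultimately show ?thesis
      by (simp add: has_real_derivative_iff_has_vector_derivative has_vector_derivative_at_within)
  qed
  have "((\<lambda>p::real. (1 - exp (- p)) * (1 - exp (- (1 - p)))) has_integral (F 1 - F 0)) {0..1}"
    apply (rule fundamental_theorem_of_calculus)
    using d by auto
  moreover have "F 1 - F 0 = 3 * exp (- 1) - 1" by (simp add: F_def)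
  ultimately show ?thesis by simp
qed

lemma pointwise:
  fixes p :: real and n N :: nat
  assumes p: "0 \<le> p" "p \<le> 1" and n: "n \<ge> 1" and N: "N \<le> n - 1"
  shows "1 - (1 - p / n) ^ N - (1 - (1 - p) / n) ^ N + (1 - 1 / n) ^ N
         \<le> (1 - exp (- p)) * (1 - exp (- (1 - p)))"
proof -
  define A where "A = (1 - p / n) ^ N"
  define B where "B = (1 - (1 - p) / n) ^ N"
  have a0: "0 \<le> 1 - p / n" "1 - p / n \<le> 1" and b0: "0 \<le> 1 - (1 - p) / n" "1 - (1 - p) / n \<le> 1"
    using p n by (auto simp: field_simps)
  have A1: "A \<le> 1" unfolding A_def using a0 by (simp add: power_le_one)
  have B1: "B \<le> 1" unfolding B_def using b0 by (simp add: power_le_one)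
  have q0: "0 \<le> 1 - 1 / real n" using n by simp
  have "1 - 1 / real n \<le> (1 - p / n) * (1 - (1 - p) / n)"
  proof -
    have "(1 - p / n) * (1 - (1 - p) / n) = 1 - 1 / n + p * (1 - p) / n ^ 2"
      using n by (simp add: field_simps power2_eq_square)
    moreover have "0 \<le> p * (1 - p) / n ^ 2" using p by simp
    ultimately show ?thesis by linarith
  qed
  then have "(1 - 1 / real n) ^ N \<le> ((1 - p / n) * (1 - (1 - p) / n)) ^ N"
    using q0 by (intro power_mono)
  then have qAB: "(1 - 1 / real n) ^ N \<le> A * B" by (simp add: A_def B_def power_mult_distrib)
  have eA: "exp (- p) \<le> A" unfolding A_def using exp_le_pow[OF p n N] .
  have eB: "exp (- (1 - p)) \<le> B" unfolding B_def using exp_le_pow[of "1 - p" n N] p n N by simp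
  have "1 - A - B + (1 - 1 / real n) ^ N \<le> (1 - A) * (1 - B)" using qAB by (simp add: algebra_simps)
  also have "\<dots> \<le> (1 - exp (- p)) * (1 - exp (- (1 - p)))"
    using eA eB A1 B1 p by (intro mult_mono) auto
  finally show ?thesis by (simp add: A_def B_def)
qed

lemma e_lower: "163 / 60 \<le> exp (1::real)"
proof -
  have "(\<Sum>k<6. 1 ^ k /\<^sub>R fact k) \<le> exp (1::real)"
    using sum_le_suminf[OF sums_summable[OF exp_converges[of "1::real"]], of "{..<6}"]
      sums_unique[OF exp_converges[of "1::real"]] by simp
  then show ?thesis by (simp add: numeral_eq_Suc fact_numeral lessThan_Suc)
qed

lemma numeric: "(3 * exp (- 1) - 1 :: real) \<le> 17 / 163" and "(17 / 163 :: real) ^ 13 \<le> 1 / 2 ^ 42"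
proof -
  show "(3 * exp (- 1) - 1 :: real) \<le> 17 / 163"
    using e_lower by (simp add: exp_minus field_simps)
  show "(17 / 163 :: real) ^ 13 \<le> 1 / 2 ^ 42" by (simp add: power_divide divide_le_eq)
qed


abbreviation Mu :: "real measure" where "Mu \<equiv> uniform_measure lborel {0..1::real}"

lemma prob_Mu: "prob_space Mu"
  by (rule prob_space_uniform_measure) auto

lemma order_pps: "product_prob_space (\<lambda>_::'a. Mu)"
  using prob_Mu
  by (simp add: product_prob_space_def product_sigma_finite_def product_prob_space_axioms_def
      prob_space_imp_sigma_finite)

lemma prod_pair_le:
  fixes q b :: real and a :: "'a \<Rightarrow> real"
  assumes "finite T" "0 \<le> q" "q \<le> 1"
  shows "(\<Prod>s\<in>T. if a s \<le> b then q else 1) * (\<Prod>s\<in>T. if b \<le> a s then q else 1) \<le> q ^ card T"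
proof -
  have "(\<Prod>s\<in>T. if a s \<le> b then q else 1) * (\<Prod>s\<in>T. if b \<le> a s then q else 1)
      = (\<Prod>s\<in>T. (if a s \<le> b then q else 1) * (if b \<le> a s then q else 1))"
    by (simp add: prod.distrib)
  also have "\<dots> \<le> (\<Prod>s\<in>T. q)"
    using assms by (intro prod_mono) (auto simp: mult_left_le)
  finally show ?thesis by simp
qed

lemma prod_pair_nonneg:
  fixes q b :: real and a :: "'a \<Rightarrow> real"
  assumes "finite T" "0 \<le> q" "q \<le> 1"
  shows "0 \<le> 1 - (\<Prod>s\<in>T. if a s \<le> b then q else 1) - (\<Prod>s\<in>T. if b \<le> a s then q else 1) + q ^ card T"
proof -
  let ?P = "(\<Prod>s\<in>T. if a s \<le> b then q else 1)" and ?Q = "(\<Prod>s\<in>T. if b \<le> a s then q else 1)"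
  have "?P \<le> 1" "?Q \<le> 1" using assms by (auto intro!: prod_le_1)
  then have "0 \<le> (1 - ?P) * (1 - ?Q)" by simp
  then show ?thesis using prod_pair_le[OF assms, of a b] by (simp add: algebra_simps)
qed

lemma integral_phi1:
  assumes "0 \<le> y" "y \<le> 1"
  shows "(\<integral>a. (if a \<le> y then c else 1) \<partial>Mu) = 1 - (1 - c) * y"
proof -
  interpret prob_space Mu by (rule prob_Mu)
  have "(\<integral>a. (if a \<le> y then c else 1) \<partial>Mu) = (\<integral>a. 1 - (1 - c) * indicator {..y} a \<partial>Mu)"
    by (intro Bochner_Integration.integral_cong) (auto simp: indicator_def)
  also have "\<dots> = (\<integral>a. 1 \<partial>Mu) - (\<integral>a. (1 - c) * indicator {..y} a \<partial>Mu)"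
    by (rule Bochner_Integration.integral_diff) (auto intro!: integrable_real_indicator simp: emeasure_eq_measure)
  also have "\<dots> = 1 - (1 - c) * measure Mu {..y}"
    by (simp add: prob_space)
  also have "measure Mu {..y} = y"
    using assms by simp
  finally show ?thesis .
qed

lemma integral_phi2:
  assumes "0 \<le> y" "y \<le> 1"
  shows "(\<integral>a. (if y \<le> a then c else 1) \<partial>Mu) = 1 - (1 - c) * (1 - y)"
proof -
  interpret prob_space Mu by (rule prob_Mu)
  have "(\<integral>a. (if y \<le> a then c else 1) \<partial>Mu) = (\<integral>a. 1 - (1 - c) * indicator {y..} a \<partial>Mu)"
    by (intro Bochner_Integration.integral_cong) (auto simp: indicator_def)
  also have "\<dots> = (\<integral>a. 1 \<partial>Mu) - (\<integral>a. (1 - c) * indicator {y..} a \<partial>Mu)"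
    by (rule Bochner_Integration.integral_diff) (auto intro!: integrable_real_indicator simp: emeasure_eq_measure)
  also have "\<dots> = 1 - (1 - c) * measure Mu {y..}"
    by (simp add: prob_space)
  also have "measure Mu {y..} = 1 - y"
    using assms by simp
  finally show ?thesis .
qed

lemma order_bound:
  fixes T :: "'a set" and x :: 'a and n :: nat
  assumes n: "n \<ge> 1" and T: "finite T" "x \<notin> T" and N: "card T \<le> n - 1"
  shows "(\<integral>\<^sup>+H. ennreal (1 - (\<Prod>s\<in>T. if H s \<le> H x then 1 - 1 / real n else 1)
            - (\<Prod>s\<in>T. if H x \<le> H s then 1 - 1 / real n else 1) + (1 - 1 / real n) ^ card T) \<partial>order_space)
         \<le> ennreal (3 * exp (- 1) - 1)"
proof -
  interpret OS: product_prob_space "\<lambda>_::'a. Mu" UNIV by (rule order_pps)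
  define q where "q = 1 - 1 / real n"
  have q: "0 \<le> q" "q \<le> 1" using n by (auto simp: q_def)
  define g where "g Z = ennreal (1 - (\<Prod>s\<in>T. if Z s \<le> Z x then q else 1)
            - (\<Prod>s\<in>T. if Z x \<le> Z s then q else 1) + q ^ card T)" for Z :: "'a \<Rightarrow> real"
  define J where "J = insert x T"
  have J: "finite J" "J \<subseteq> UNIV" using T by (auto simp: J_def)
  have gm: "g \<in> borel_measurable (PiM J (\<lambda>_. Mu))"
    unfolding g_def J_def using T by measurable
  have "(\<integral>\<^sup>+H. ennreal (1 - (\<Prod>s\<in>T. if H s \<le> H x then 1 - 1 / real n else 1)
            - (\<Prod>s\<in>T. if H x \<le> H s then 1 - 1 / real n else 1) + (1 - 1 / real n) ^ card T) \<partial>order_space)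
        = (\<integral>\<^sup>+H. g (restrict H J) \<partial>PiM UNIV (\<lambda>_. Mu))"
    unfolding order_space_def g_def q_def J_def
    by (intro nn_integral_cong arg_cong[where f=ennreal] arg_cong2[where f="(+)"] arg_cong2[where f="(-)"] prod.cong)
       (auto simp: T)
  also have "\<dots> = (\<integral>\<^sup>+Z. g Z \<partial>distr (PiM UNIV (\<lambda>_. Mu)) (PiM J (\<lambda>_. Mu)) (\<lambda>H. restrict H J))"
    by (rule nn_integral_distr[symmetric, OF measurable_restrict_subset[OF J(2)]]) (simp add: gm)
  also have "\<dots> = (\<integral>\<^sup>+Z. g Z \<partial>PiM J (\<lambda>_. Mu))"
    using J by (simp add: OS.distr_PiM_restrict_finite)
  also have "\<dots> = (\<integral>\<^sup>+y. (\<integral>\<^sup>+Z. g (Z(x := y)) \<partial>PiM T (\<lambda>_. Mu)) \<partial>Mu)"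
    unfolding J_def by (rule OS.product_nn_integral_insert_rev) (use T gm J_def in auto)
  also have "\<dots> = (\<integral>\<^sup>+y. ennreal (1 - (1 - y / n) ^ card T - (1 - (1 - y) / n) ^ card T + q ^ card T) \<partial>Mu)"
  proof (rule nn_integral_cong_AE)
    have inner: "(\<integral>\<^sup>+Z. g (Z(x := y)) \<partial>PiM T (\<lambda>_. Mu)) =
        ennreal (1 - (1 - y / n) ^ card T - (1 - (1 - y) / n) ^ card T + q ^ card T)"
      if y: "0 \<le> y" "y \<le> 1" for y
    proof -
      interpret PT: finite_product_prob_space "\<lambda>_. Mu" T
        using T by unfold_locales
      let ?f1 = "\<lambda>s a. if a \<le> y then q else 1"
      let ?f2 = "\<lambda>s a. if y \<le> a then q else 1"
      have ge: "g (Z(x := y)) = ennreal (1 - (\<Prod>s\<in>T. ?f1 s (Z s)) - (\<Prod>s\<in>T. ?f2 s (Z s)) + q ^ card T)" for Z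
        unfolding g_def using T
        by (intro arg_cong[where f=ennreal] arg_cong2[where f="(+)"] arg_cong2[where f="(-)"] prod.cong refl)
           (auto split: if_splits)
      have int1: "integrable Mu (?f1 s)" for s
        by (rule finite_measure.integrable_const_bound[where B=1]) (use q prob_Mu prob_space_def in auto)
      have int2: "integrable Mu (?f2 s)" for s
        by (rule finite_measure.integrable_const_bound[where B=1]) (use q prob_Mu prob_space_def in auto)
      have i1: "integrable (PiM T (\<lambda>_. Mu)) (\<lambda>Z. \<Prod>s\<in>T. ?f1 s (Z s))"
        by (rule OS.product_integrable_prod) (use T int1 in auto)
      have i2: "integrable (PiM T (\<lambda>_. Mu)) (\<lambda>Z. \<Prod>s\<in>T. ?f2 s (Z s))"
        by (rule OS.product_integrable_prod) (use T int2 in auto)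
      have e1: "(\<integral>Z. (\<Prod>s\<in>T. ?f1 s (Z s)) \<partial>PiM T (\<lambda>_. Mu)) = (1 - y / n) ^ card T"
      proof -
        have "(\<integral>Z. (\<Prod>s\<in>T. ?f1 s (Z s)) \<partial>PiM T (\<lambda>_. Mu)) = (\<Prod>s\<in>T. (\<integral>a. ?f1 s a \<partial>Mu))"
          by (rule OS.product_integral_prod) (use T int1 in auto)
        also have "\<dots> = (\<Prod>s\<in>T. 1 - y / n)"
          using y by (simp add: integral_phi1 q_def)
        finally show ?thesis by simp
      qed
      have e2: "(\<integral>Z. (\<Prod>s\<in>T. ?f2 s (Z s)) \<partial>PiM T (\<lambda>_. Mu)) = (1 - (1 - y) / n) ^ card T"
      proof -
        have "(\<integral>Z. (\<Prod>s\<in>T. ?f2 s (Z s)) \<partial>PiM T (\<lambda>_. Mu)) = (\<Prod>s\<in>T. (\<integral>a. ?f2 s a \<partial>Mu))"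
          by (rule OS.product_integral_prod) (use T int2 in auto)
        also have "\<dots> = (\<Prod>s\<in>T. 1 - (1 - y) / n)"
          using y by (simp add: integral_phi2 q_def)
        finally show ?thesis by simp
      qed
      have "(\<integral>\<^sup>+Z. g (Z(x := y)) \<partial>PiM T (\<lambda>_. Mu))
          = (\<integral>\<^sup>+Z. ennreal (1 - (\<Prod>s\<in>T. ?f1 s (Z s)) - (\<Prod>s\<in>T. ?f2 s (Z s)) + q ^ card T) \<partial>PiM T (\<lambda>_. Mu))"
        by (simp add: ge)
      also have "\<dots> = ennreal (\<integral>Z. (1 - (\<Prod>s\<in>T. ?f1 s (Z s)) - (\<Prod>s\<in>T. ?f2 s (Z s)) + q ^ card T) \<partial>PiM T (\<lambda>_. Mu))"
        by (rule nn_integral_eq_integral) (use i1 i2 prod_pair_nonneg[OF T(1) q] in auto)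
      also have "(\<integral>Z. (1 - (\<Prod>s\<in>T. ?f1 s (Z s)) - (\<Prod>s\<in>T. ?f2 s (Z s)) + q ^ card T) \<partial>PiM T (\<lambda>_. Mu))
          = 1 - (1 - y / n) ^ card T - (1 - (1 - y) / n) ^ card T + q ^ card T"
        using i1 i2 e1 e2 prob_space.prob_space[OF prob_space_PiM[of T "\<lambda>_. Mu", OF prob_Mu]] by simp
      finally show ?thesis .
    qed
    show "AE y in Mu. (\<integral>\<^sup>+Z. g (Z(x := y)) \<partial>PiM T (\<lambda>_. Mu)) =
        ennreal (1 - (1 - y / n) ^ card T - (1 - (1 - y) / n) ^ card T + q ^ card T)"
      by (rule AE_uniform_measureI) (auto intro!: inner)
  qed
  also have "\<dots> \<le> (\<integral>\<^sup>+y. ennreal ((1 - exp (- y)) * (1 - exp (- (1 - y)))) \<partial>Mu)"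
  proof (rule nn_integral_mono_AE)
    show "AE y in Mu. ennreal (1 - (1 - y / n) ^ card T - (1 - (1 - y) / n) ^ card T + q ^ card T)
        \<le> ennreal ((1 - exp (- y)) * (1 - exp (- (1 - y))))"
      by (rule AE_uniform_measureI, simp, rule AE_I2)
         (use pointwise[OF _ _ n N] in \<open>auto intro!: ennreal_leI simp: q_def\<close>)
  qed
  also have "\<dots> = ennreal (3 * exp (- 1) - 1)"
  proof -
    have "(\<integral>\<^sup>+y. ennreal ((1 - exp (- y)) * (1 - exp (- (1 - y)))) \<partial>Mu)
        = (\<integral>\<^sup>+y. ennreal ((1 - exp (- y)) * (1 - exp (- (1 - y)))) * indicator {0..1} y \<partial>lborel) / emeasure lborel {0..1::real}"
      by (rule nn_integral_uniform_measure) auto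
    also have "\<dots> = (\<integral>\<^sup>+y. ennreal (indicator {0..1} y * ((1 - exp (- y)) * (1 - exp (- (1 - y))))) \<partial>lborel)"
      by (simp add: divide_ennreal_def, intro nn_integral_cong) (auto simp: indicator_def)
    also have "\<dots> = ennreal (3 * exp (- 1) - 1)"
      by (rule nn_integral_has_integral_lebesgue[OF _ G_integral]) auto
    finally show ?thesis .
  qed
  finally show ?thesis .
qed


lemma prob_HS: "prob_space (hash_space n)"
  unfolding hash_space_def by (rule prob_space_PiM) (rule prob_space_measure_pmf)

lemma prob_OS: "prob_space order_space"
  unfolding order_space_def by (rule prob_space_PiM) (rule prob_Mu)

lemma space_OS[simp]: "space order_space = UNIV"
  by (simp add: order_space_def space_PiM)

lemma hash_upper:
  fixes T :: "'a set" and x :: 'a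
  assumes n: "n \<ge> 1" and T: "finite T" "x \<notin> T"
  shows "emeasure (hash_space n) {h. \<exists>s\<in>T. h s = h x \<and> B s}
     \<le> ennreal (1 - (\<Prod>s\<in>T. if B s then 1 - 1/real n else 1))"
proof -
  interpret HS: prob_space "hash_space n" by (rule prob_HS)
  have ms: "{h. \<forall>s\<in>T. B s \<longrightarrow> h s \<noteq> h x} \<in> sets (hash_space n)"
  proof -
    have "{h \<in> space (hash_space n). \<forall>s\<in>T. B s \<longrightarrow> h s \<noteq> h x} \<in> sets (hash_space n)"
      unfolding hash_space_def using T by measurable
    then show ?thesis by simp
  qed
  have eq: "{h. \<exists>s\<in>T. h s = h x \<and> B s} = space (hash_space n) - {h. \<forall>s\<in>T. B s \<longrightarrow> h s \<noteq> h x}"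
    by auto
  have "measure (hash_space n) {h. \<exists>s\<in>T. h s = h x \<and> B s} = 1 - measure (hash_space n) {h. \<forall>s\<in>T. B s \<longrightarrow> h s \<noteq> h x}"
    unfolding eq using ms by (rule HS.prob_compl)
  also have "\<dots> \<le> 1 - (\<Prod>s\<in>T. if B s then 1 - 1/real n else 1)"
    using hash_lower[OF n T, of B] by simp
  finally show ?thesis
    by (simp add: HS.emeasure_eq_measure ennreal_leI)
qed

lemma A: "(\<lambda>\<omega>. fst \<omega> s) \<in> triple_space n \<rightarrow>\<^sub>M Mh n"
proof -
  have "(\<lambda>f. f s) \<in> hash_space n \<rightarrow>\<^sub>M Mh n"
    unfolding hash_space_def by (rule measurable_component_singleton) simp
  then show ?thesis unfolding triple_space_def
    by (rule measurable_compose[OF measurable_fst])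
qed
lemma B: "(\<lambda>\<omega>. fst (snd \<omega>) s) \<in> triple_space n \<rightarrow>\<^sub>M Mh n"
proof -
  have "(\<lambda>f. f s) \<in> hash_space n \<rightarrow>\<^sub>M Mh n"
    unfolding hash_space_def by (rule measurable_component_singleton) simp
  then have "(\<lambda>\<omega>. fst \<omega> s) \<in> hash_space n \<Otimes>\<^sub>M order_space \<rightarrow>\<^sub>M Mh n"
    by (rule measurable_compose[OF measurable_fst])
  then show ?thesis unfolding triple_space_def
    by (rule measurable_compose[OF measurable_snd])
qed
lemma m1: "(\<lambda>\<omega>. fst \<omega> s) \<in> borel_measurable (triple_space n)"
  using A by (subst measurable_cong_sets[of _ "triple_space n" _ "Mh n"]) (auto simp: sets_borel_eq_count_space)
lemma m2: "(\<lambda>\<omega>. fst (snd \<omega>) s) \<in> borel_measurable (triple_space n)"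
  using B by (subst measurable_cong_sets[of _ "triple_space n" _ "Mh n"]) (auto simp: sets_borel_eq_count_space)
lemma m3: "(\<lambda>\<omega>. snd (snd \<omega>) s) \<in> borel_measurable (triple_space n)"
proof -
  have "(\<lambda>\<omega>. snd (snd \<omega>) s) \<in> triple_space n \<rightarrow>\<^sub>M Mu"
    unfolding triple_space_def order_space_def
    by (rule measurable_compose[OF measurable_snd measurable_compose[OF measurable_snd measurable_component_singleton]]) simp
  then show ?thesis by (subst measurable_cong_sets[of _ "triple_space n" _ "Mu"]) auto
qed

lemma E_meas: "finite T \<Longrightarrow> {\<omega> \<in> space (triple_space n). (\<exists>s\<in>T. fst \<omega> s = fst \<omega> x \<and> snd (snd \<omega>) s \<le> snd (snd \<omega>) x)
       \<and> (\<exists>s\<in>T. fst (snd \<omega>) s = fst (snd \<omega>) x \<and> snd (snd \<omega>) x \<le> snd (snd \<omega>) s)} \<in> sets (triple_space n)"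
proof -
  assume T: "finite T"
  have "{\<omega> \<in> space (triple_space n). (\<exists>s\<in>T. fst \<omega> s = fst \<omega> x \<and> snd (snd \<omega>) s \<le> snd (snd \<omega>) x)
       \<and> (\<exists>s\<in>T. fst (snd \<omega>) s = fst (snd \<omega>) x \<and> snd (snd \<omega>) x \<le> snd (snd \<omega>) s)}
    = (\<Union>s\<in>T. {\<omega> \<in> space (triple_space n). fst \<omega> s = fst \<omega> x} \<inter> {\<omega> \<in> space (triple_space n). snd (snd \<omega>) s \<le> snd (snd \<omega>) x})
      \<inter> (\<Union>s\<in>T. {\<omega> \<in> space (triple_space n). fst (snd \<omega>) s = fst (snd \<omega>) x} \<inter> {\<omega> \<in> space (triple_space n). snd (snd \<omega>) x \<le> snd (snd \<omega>) s})"
    by blast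
  also have "\<dots> \<in> sets (triple_space n)"
    using T by (intro sets.Int sets.finite_UN ballI measurable_equality_set borel_measurable_le m1 m2 m3)
  finally show ?thesis .
qed

lemma triple_bound:
  fixes T :: "'a set" and x :: 'a and n :: nat
  assumes n: "n \<ge> 1" and T: "finite T" "x \<notin> T" and N: "card T \<le> n - 1"
  shows "emeasure (triple_space n) {(h1, h2, H). (\<exists>s\<in>T. h1 s = h1 x \<and> H s \<le> H x) \<and> (\<exists>s\<in>T. h2 s = h2 x \<and> H x \<le> H s)}
     \<le> ennreal (3 * exp (- 1) - 1)"
proof -
  let ?HS = "hash_space n :: ('a \<Rightarrow> nat) measure" and ?OS = "order_space :: ('a \<Rightarrow> real) measure"
  interpret HS: prob_space ?HS by (rule prob_HS)
  interpret OS: prob_space ?OS by (rule prob_OS)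
  interpret p2: pair_sigma_finite ?HS ?OS
    by (intro pair_sigma_finite.intro prob_space_imp_sigma_finite prob_HS prob_OS)
  interpret p1: pair_sigma_finite ?HS "?HS \<Otimes>\<^sub>M ?OS"
    by (intro pair_sigma_finite.intro prob_space_imp_sigma_finite prob_HS prob_space_pair prob_OS)
  define A1 where "A1 H = {h :: 'a \<Rightarrow> nat. \<exists>s\<in>T. h s = h x \<and> H s \<le> H x}" for H :: "'a \<Rightarrow> real"
  define A2 where "A2 H = {h :: 'a \<Rightarrow> nat. \<exists>s\<in>T. h s = h x \<and> H x \<le> H s}" for H :: "'a \<Rightarrow> real"
  define E where "E = {(h1 :: 'a \<Rightarrow> nat, h2 :: 'a \<Rightarrow> nat, H :: 'a \<Rightarrow> real). (\<exists>s\<in>T. h1 s = h1 x \<and> H s \<le> H x) \<and> (\<exists>s\<in>T. h2 s = h2 x \<and> H x \<le> H s)}"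
  have Esets: "E \<in> sets (triple_space n)"
  proof -
    note E_meas[OF T(1), of n x]
    moreover have "space (triple_space n) = UNIV"
      by (simp add: triple_space_def space_pair_measure)
    moreover have "E = {\<omega> \<in> space (triple_space n). (\<exists>s\<in>T. fst \<omega> s = fst \<omega> x \<and> snd (snd \<omega>) s \<le> snd (snd \<omega>) x)
       \<and> (\<exists>s\<in>T. fst (snd \<omega>) s = fst (snd \<omega>) x \<and> snd (snd \<omega>) x \<le> snd (snd \<omega>) s)}"
      unfolding E_def by (auto simp: triple_space_def space_pair_measure)
    ultimately show ?thesis by simp
  qed
  have A1s: "A1 H \<in> sets ?HS" for H
  proof -
    have "{h \<in> space ?HS. \<exists>s\<in>T. h s = h x \<and> H s \<le> H x} \<in> sets ?HS"
      unfolding hash_space_def using T by measurable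
    then show ?thesis by (simp add: A1_def)
  qed
  have A2s: "A2 H \<in> sets ?HS" for H
  proof -
    have "{h \<in> space ?HS. \<exists>s\<in>T. h s = h x \<and> H x \<le> H s} \<in> sets ?HS"
      unfolding hash_space_def using T by measurable
    then show ?thesis by (simp add: A2_def)
  qed
  have ind: "indicator E (h1, h2, H) = indicator (A1 H) h1 * (indicator (A2 H) h2 :: ennreal)" for h1 h2 H
    by (simp add: E_def A1_def A2_def indicator_def)
  have mE[measurable]: "indicator E \<in> borel_measurable (?HS \<Otimes>\<^sub>M (?HS \<Otimes>\<^sub>M ?OS))"
    using Esets unfolding triple_space_def by simp
  have "emeasure (triple_space n) E = (\<integral>\<^sup>+\<omega>. indicator E \<omega> \<partial>(?HS \<Otimes>\<^sub>M (?HS \<Otimes>\<^sub>M ?OS)))"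
    using Esets by (simp add: triple_space_def)
  also have "\<dots> = (\<integral>\<^sup>+p. (\<integral>\<^sup>+h1. indicator E (h1, p) \<partial>?HS) \<partial>(?HS \<Otimes>\<^sub>M ?OS))"
    by (rule p1.nn_integral_snd[symmetric]) simp
  also have "\<dots> = (\<integral>\<^sup>+H. (\<integral>\<^sup>+h2. (\<integral>\<^sup>+h1. indicator E (h1, h2, H) \<partial>?HS) \<partial>?HS) \<partial>?OS)"
    by (rule p2.nn_integral_snd[symmetric, where f="\<lambda>p. (\<integral>\<^sup>+h1. indicator E (h1, p) \<partial>?HS)"]) measurable
  also have "\<dots> = (\<integral>\<^sup>+H. emeasure ?HS (A1 H) * emeasure ?HS (A2 H) \<partial>?OS)"
  proof (rule nn_integral_cong)
    fix H
    have "(\<integral>\<^sup>+h2. (\<integral>\<^sup>+h1. indicator E (h1, h2, H) \<partial>?HS) \<partial>?HS)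
        = (\<integral>\<^sup>+h2. emeasure ?HS (A1 H) * indicator (A2 H) h2 \<partial>?HS)"
      unfolding ind
      by (intro nn_integral_cong, subst nn_integral_multc, rule borel_measurable_indicator, rule A1s) (simp add: A1s)
    also have "\<dots> = emeasure ?HS (A1 H) * emeasure ?HS (A2 H)"
      by (rule nn_integral_cmult_indicator[OF A2s])
    finally show "(\<integral>\<^sup>+h2. (\<integral>\<^sup>+h1. indicator E (h1, h2, H) \<partial>?HS) \<partial>?HS) = emeasure ?HS (A1 H) * emeasure ?HS (A2 H)" .
  qed
  also have "\<dots> \<le> (\<integral>\<^sup>+H. ennreal (1 - (\<Prod>s\<in>T. if H s \<le> H x then 1 - 1 / real n else 1)
            - (\<Prod>s\<in>T. if H x \<le> H s then 1 - 1 / real n else 1) + (1 - 1 / real n) ^ card T) \<partial>?OS)"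
  proof (rule nn_integral_mono)
    fix H :: "'a \<Rightarrow> real"
    let ?P = "\<Prod>s\<in>T. if H s \<le> H x then 1 - 1 / real n else 1"
    let ?Q = "\<Prod>s\<in>T. if H x \<le> H s then 1 - 1 / real n else 1"
    have q: "0 \<le> 1 - 1 / real n" "1 - 1 / real n \<le> 1" using n by auto
    have P1: "?P \<le> 1" and Q1: "?Q \<le> 1" using q by (auto intro!: prod_le_1)
    have "emeasure ?HS (A1 H) * emeasure ?HS (A2 H) \<le> ennreal (1 - ?P) * ennreal (1 - ?Q)"
      unfolding A1_def A2_def
      by (intro mult_mono hash_upper[OF n T]) auto
    also have "\<dots> = ennreal ((1 - ?P) * (1 - ?Q))"
      using P1 Q1 by (simp add: ennreal_mult)
    also have "\<dots> \<le> ennreal (1 - ?P - ?Q + (1 - 1 / real n) ^ card T)"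
      using prod_pair_le[OF T(1) q, of H "H x"] by (intro ennreal_leI) (simp add: algebra_simps)
    finally show "emeasure ?HS (A1 H) * emeasure ?HS (A2 H) \<le> ennreal (1 - ?P - ?Q + (1 - 1 / real n) ^ card T)" .
  qed
  also have "\<dots> \<le> ennreal (3 * exp (- 1) - 1)"
    by (rule order_bound[OF n T N])
  finally show ?thesis unfolding E_def .
qed


theorem mainTheorem3:
  fixes M t n :: nat and S :: "nat \<Rightarrow> 'a set" and x :: 'a
  assumes "M \<ge> 1" and "t \<ge> 1" and "n = M * t"
    and "\<forall>k\<in>{1..t}. finite (S k) \<and> card (S k) \<le> M"
    and "\<forall>k\<in>{1..t}. x \<in> S k"
  shows "measure (triple_space n) {\<omega> \<in> space (triple_space n). fails_both t S x \<omega>}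
           \<le> integral {0..1} (\<lambda>p::real. (1 - exp (- p)) * (1 - exp (- (1 - p))))
    \<and> integral {0..1} (\<lambda>p::real. (1 - exp (- p)) * (1 - exp (- (1 - p)))) = 3 * exp (- 1) - 1
    \<and> (\<forall>m::nat. measure (PiM {..<m} (\<lambda>_. triple_space n))
            {\<omega> \<in> space (PiM {..<m} (\<lambda>_. triple_space n)). \<forall>i<m. fails_both t S x (\<omega> i)}
          \<le> (3 * exp (- 1) - 1) ^ m)
    \<and> measure (PiM {..<13::nat} (\<lambda>_. triple_space n))
            {\<omega> \<in> space (PiM {..<13::nat} (\<lambda>_. triple_space n)). \<forall>i<(13::nat). fails_both t S x (\<omega> i)}
          \<le> 1 / 2 ^ 42"
proof -
  note fin = assms(4) and xin = assms(5)
  have n1: "n \<ge> 1" using assms(1,2,3) by simp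
  define T where "T = (\<Union>k\<in>{1..t}. S k - {x})"
  have Tfin: "finite T" unfolding T_def using fin by auto
  have xT: "x \<notin> T" unfolding T_def by auto
  have "card T \<le> (\<Sum>k\<in>{1..t}. card (S k - {x}))"
    unfolding T_def by (rule card_UN_le) simp
  also have "\<dots> \<le> (\<Sum>k\<in>{1..t}. M - 1)"
  proof (intro sum_mono)
    fix k assume k: "k \<in> {1..t}"
    then have "card (S k) \<le> M" "x \<in> S k" "finite (S k)" using fin xin by auto
    then show "card (S k - {x}) \<le> M - 1" by (simp add: card_Diff_singleton)
  qed
  also have "\<dots> = t * (M - 1)" by simp
  also have "\<dots> \<le> n - 1" using assms(1,2,3) by (simp add: diff_mult_distrib2 mult.commute)
  finally have NT: "card T \<le> n - 1" .
  define c where "c = 3 * exp (- 1) - (1::real)"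
  have c0: "0 \<le> c" unfolding c_def using exp_le by (simp add: exp_minus field_simps)
  have Gint: "integral {0..1} (\<lambda>p::real. (1 - exp (- p)) * (1 - exp (- (1 - p)))) = c"
    unfolding c_def using G_integral by (rule integral_unique)
  define Ev where "Ev = {\<omega> \<in> space (triple_space n). fails_both t S x \<omega>}"
  have Ev_eq: "Ev = {(h1, h2, H). (\<exists>s\<in>T. h1 s = h1 x \<and> H s \<le> H x) \<and> (\<exists>s\<in>T. h2 s = h2 x \<and> H x \<le> H s)}"
    unfolding Ev_def T_def
    by (auto simp: triple_space_def space_pair_measure fails_both_def placed1_def placed2_def not_less)
  have prob_triple: "prob_space (triple_space n)"
    unfolding triple_space_def by (intro prob_space_pair prob_HS prob_OS)
  interpret TR: prob_space "triple_space n" by (rule prob_triple)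
  have Ev_sets: "Ev \<in> sets (triple_space n)"
  proof -
    have "Ev = {\<omega> \<in> space (triple_space n). (\<exists>s\<in>T. fst \<omega> s = fst \<omega> x \<and> snd (snd \<omega>) s \<le> snd (snd \<omega>) x)
       \<and> (\<exists>s\<in>T. fst (snd \<omega>) s = fst (snd \<omega>) x \<and> snd (snd \<omega>) x \<le> snd (snd \<omega>) s)}"
      unfolding Ev_eq by (auto simp: triple_space_def space_pair_measure)
    then show ?thesis using E_meas[OF Tfin, of n x] by simp
  qed
  have "emeasure (triple_space n) Ev \<le> ennreal c"
    unfolding Ev_eq c_def by (rule triple_bound[OF n1 Tfin xT NT])
  then have PE: "measure (triple_space n) Ev \<le> c"
    using c0 by (simp add: TR.emeasure_eq_measure)
  have PE0: "0 \<le> measure (triple_space n) Ev" by simp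
  have part3: "measure (PiM {..<m} (\<lambda>_. triple_space n))
            {\<omega> \<in> space (PiM {..<m} (\<lambda>_. triple_space n)). \<forall>i<m. fails_both t S x (\<omega> i)} \<le> c ^ m" for m
  proof -
    interpret TP: finite_product_prob_space "\<lambda>_. triple_space n" "{..<m}"
      by (simp add: finite_product_prob_space_def finite_product_sigma_finite_def product_sigma_finite_def
          product_prob_space_def product_prob_space_axioms_def finite_product_sigma_finite_axioms_def
          prob_space_imp_sigma_finite prob_triple)
    have "{\<omega> \<in> space (PiM {..<m} (\<lambda>_. triple_space n)). \<forall>i<m. fails_both t S x (\<omega> i)}
        = Pi\<^sub>E {..<m} (\<lambda>_. Ev)"
      unfolding Ev_def by (auto simp: space_PiM PiE_def Pi_def)
    then have "measure (PiM {..<m} (\<lambda>_. triple_space n))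
            {\<omega> \<in> space (PiM {..<m} (\<lambda>_. triple_space n)). \<forall>i<m. fails_both t S x (\<omega> i)}
        = (\<Prod>i\<in>{..<m}. measure (triple_space n) Ev)"
      using Ev_sets by (simp add: TP.finite_measure_PiM_emb)
    also have "\<dots> = measure (triple_space n) Ev ^ m" by simp
    also have "\<dots> \<le> c ^ m" using PE PE0 by (rule power_mono)
    finally show ?thesis .
  qed
  have "c ^ 13 \<le> (17 / 163) ^ 13"
    using numeric c0 unfolding c_def by (intro power_mono) auto
  also have "\<dots> \<le> 1 / 2 ^ 42" by (simp add: power_divide divide_le_eq)
  finally have c13: "c ^ 13 \<le> 1 / 2 ^ 42" .
  show ?thesis
  proof (intro conjI allI)
    show "measure (triple_space n) {\<omega> \<in> space (triple_space n). fails_both t S x \<omega>}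
           \<le> integral {0..1} (\<lambda>p::real. (1 - exp (- p)) * (1 - exp (- (1 - p))))"
      using PE Gint unfolding Ev_def by simp
    show "integral {0..1} (\<lambda>p::real. (1 - exp (- p)) * (1 - exp (- (1 - p)))) = 3 * exp (- 1) - 1"
      using Gint unfolding c_def .
    show "measure (PiM {..<m} (\<lambda>_. triple_space n))
            {\<omega> \<in> space (PiM {..<m} (\<lambda>_. triple_space n)). \<forall>i<m. fails_both t S x (\<omega> i)}
          \<le> (3 * exp (- 1) - 1) ^ m" for m
      using part3[of m] unfolding c_def .
    show "measure (PiM {..<13::nat} (\<lambda>_. triple_space n))
            {\<omega> \<in> space (PiM {..<13::nat} (\<lambda>_. triple_space n)). \<forall>i<(13::nat). fails_both t S x (\<omega> i)}
          \<le> 1 / 2 ^ 42"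
      using part3[of 13] c13 by linarith
  qed
qed

end
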